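(* Let $\mathcal G$ be a good and equicontinuous pseudogroup on a compact metric space $X$, with good generating set $\mathcal G_1$ and compacted generating set $\mathcal G_2$. Then there is no Borel probability measure on $X$ that is $(\mathcal G,\mathcal G_2)$-expansive.
   Context: $\mathrm{Homeo}(X)$: homeomorphisms $g:D_g\to R_g$ between open subsets of $X$, composed on natural domains $D_{h\circ g}=g^{-1}(D_h)$. A pseudogroup is a subset of $\mathrm{Homeo}(X)$ containing $\mathrm{id}_X$, closed under composition, inversion, restriction to open subsets, and gluing along open covers of the domain. $\Gamma$ generates $\mathcal G$ if $\bigcup_{g\in\Gamma}(D_g\cup R_g)=X$ and $\mathcal G$ is exactly the set of $g\in\mathrm{Homeo}(X)$ locally equal near each point of $D_g$ to a finite composition of elements of $\Gamma$ and their inverses. A finite symmetric (containing $\mathrm{id}_X$, closed under inverses) generating set $\mathcal G_1$ is good if for each $g\in\mathcal G_1$ there is a compact $K_g\subset D_g$ such that $\mathcal G_2=\{g|_{\mathrm{int}(K_g)}:g\in\mathcal G_1\}$ still generates $\mathcal G$ ($\mathcal G_2$ is the compacted generating set; $\mathcal G$ is good if it has a good generating set). $\mathcal G$ is equicontinuous if it has a generating set $\Gamma$ closed under composition and inversion and satisfying: for every $\varepsilon>0$ there is $\delta>0$ such that for all $x,y\in X$ and $g\in\Gamma$ with $x,y\in D_g$, $d(x,y)<\delta\Rightarrow d(g(x),g(y))<\varepsilon$. Let $\mathcal G^2_n=\{h_1\circ\cdots\circ h_n:h_j\in\mathcal G_2\}$, $\mathcal G^{2,x}_n=\{g\in\mathcal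 G^2_n:x\in D_g\}$, $\Phi^2_\delta(x)=\{y:d(g(x),g(y))\le\delta\ \forall n\in\mathbb N,\ \forall g\in\mathcal G^{2,x}_n\cap\mathcal G^{2,y}_n\}$. A Borel probability measure $\mu$ is $(\mathcal G,\mathcal G_2)$-expansive if there is $\delta>0$ with $\mu(\Phi^2_\delta(x))=0$ for every $x\in X$. *)

theory Defs
  imports "HOL-Analysis.Analysis" "HOL-Probability.Probability"
begin

(* Partial maps g : D_g -> R_g on a metric space (the whole type is X) are
represented as maps 'a \<rightharpoonup> 'a, with D_g = dom g and R_g = ran g.
Composition on natural domains is map composition map composition, identity is Some. *)

definition phomeo :: "('a::topological_space \<rightharpoonup> 'a) \<Rightarrow> bool" where
  "phomeo g \<longleftrightarrow> open (dom g) \<and> open (ran g) \<and>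
     (\<exists>f'. homeomorphism (dom g) (ran g) (\<lambda>x. the (g x)) f')"

definition pinv :: "('a \<rightharpoonup> 'a) \<Rightarrow> ('a \<rightharpoonup> 'a)" where
  "pinv g = (\<lambda>y. if y \<in> ran g then Some (THE x. g x = Some y) else None)"

definition pseudogroup :: "('a::topological_space \<rightharpoonup> 'a) set \<Rightarrow> bool" where
  "pseudogroup G \<longleftrightarrow>
     (\<forall>g\<in>G. phomeo g) \<and> Some \<in> G \<and>
     (\<forall>g\<in>G. \<forall>h\<in>G. h \<circ>\<^sub>m g \<in> G) \<and>
     (\<forall>g\<in>G. pinv g \<in> G) \<and>
     (\<forall>g\<in>G. \<forall>U. open U \<longrightarrow> g |` U \<in> G) \<and>
     (\<forall>g. phomeo g \<and> (\<forall>x\<in>dom g. \<exists>U. open U \<and> x \<in> U \<and> g |` U \<in> G) \<longrightarrow> g \<in> G)"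

definition pcomp_list :: "('a \<rightharpoonup> 'a) list \<Rightarrow> ('a \<rightharpoonup> 'a)" where
  "pcomp_list hs = foldr (\<lambda>h acc. h \<circ>\<^sub>m acc) hs Some"

definition generates :: "('a::topological_space \<rightharpoonup> 'a) set \<Rightarrow> ('a \<rightharpoonup> 'a) set \<Rightarrow> bool" where
  "generates \<Gamma> G \<longleftrightarrow>
     (\<forall>g\<in>\<Gamma>. phomeo g) \<and>
     (\<Union>g\<in>\<Gamma>. dom g \<union> ran g) = UNIV \<and>
     G = {g. phomeo g \<and>
            (\<forall>x\<in>dom g. \<exists>U hs. open U \<and> x \<in> U \<and> U \<subseteq> dom g \<and>
                 set hs \<subseteq> \<Gamma> \<union> pinv ` \<Gamma> \<and> g |` U = pcomp_list hs |` U)}"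

definition compacted :: "('a::topological_space \<rightharpoonup> 'a) set \<Rightarrow> (('a \<rightharpoonup> 'a) \<Rightarrow> 'a set) \<Rightarrow> ('a \<rightharpoonup> 'a) set" where
  "compacted G1 K = {g |` interior (K g) | g. g \<in> G1}"

definition good_generating_set ::
  "('a::topological_space \<rightharpoonup> 'a) set \<Rightarrow> ('a \<rightharpoonup> 'a) set \<Rightarrow> (('a \<rightharpoonup> 'a) \<Rightarrow> 'a set) \<Rightarrow> bool" where
  "good_generating_set G G1 K \<longleftrightarrow>
     finite G1 \<and> Some \<in> G1 \<and> (\<forall>g\<in>G1. pinv g \<in> G1) \<and> generates G1 G \<and>
     (\<forall>g\<in>G1. compact (K g) \<and> K g \<subseteq> dom g) \<and>
     generates (compacted G1 K) G"

definition equicontinuous_pg :: "('a::metric_space \<rightharpoonup> 'a) set \<Rightarrow> bool" where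
  "equicontinuous_pg G \<longleftrightarrow>
     (\<exists>\<Gamma>. generates \<Gamma> G \<and> (\<forall>g\<in>\<Gamma>. \<forall>h\<in>\<Gamma>. h \<circ>\<^sub>m g \<in> \<Gamma>) \<and> (\<forall>g\<in>\<Gamma>. pinv g \<in> \<Gamma>) \<and>
       (\<forall>\<epsilon>>0. \<exists>\<delta>>0. \<forall>g\<in>\<Gamma>. \<forall>x\<in>dom g. \<forall>y\<in>dom g.
           dist x y < \<delta> \<longrightarrow> dist (the (g x)) (the (g y)) < \<epsilon>))"

definition words :: "('a \<rightharpoonup> 'a) set \<Rightarrow> nat \<Rightarrow> ('a \<rightharpoonup> 'a) set" where
  "words G2 n = {pcomp_list hs | hs. length hs = n \<and> set hs \<subseteq> G2}"

(* \<Phi>^2_\<delta>(x); n ranges over \<nat> = {1,2,...}. *)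
definition Phi :: "('a::metric_space \<rightharpoonup> 'a) set \<Rightarrow> real \<Rightarrow> 'a \<Rightarrow> 'a set" where
  "Phi G2 \<delta> x = {y. \<forall>n\<ge>1. \<forall>g\<in>words G2 n. x \<in> dom g \<and> y \<in> dom g \<longrightarrow>
                      dist (the (g x)) (the (g y)) \<le> \<delta>}"

definition expansive_measure :: "('a::metric_space \<rightharpoonup> 'a) set \<Rightarrow> 'a measure \<Rightarrow> bool" where
  "expansive_measure G2 \<mu> \<longleftrightarrow> (\<exists>\<delta>>0. \<forall>x. Phi G2 \<delta> x \<in> null_sets \<mu>)"

end

theory Submission
  imports Defs
begin

lemma fin_uniform:
  assumes "finite A" and "\<forall>a\<in>A. \<exists>e>0. Q a e"
    and mono: "\<And>a e e'. Q a e \<Longrightarrow> 0 < e' \<Longrightarrow> e' \<le> e \<Longrightarrow> Q a e'"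
  shows "\<exists>e>0. \<forall>a\<in>A. Q a (e::real)"
  using assms(1,2)
proof (induction A rule: finite_induct)
  case empty
  then show ?case by (intro exI[of _ 1]) auto
next
  case (insert a A)
  then obtain e where e: "e > 0" "\<forall>b\<in>A. Q b e" by auto
  from insert obtain e2 where e2: "e2 > 0" "Q a e2" by auto
  show ?case
    by (rule exI[of _ "min e e2"]) (use e e2 mono in auto)
qed

lemma map_comp_Some_right: "g \<circ>\<^sub>m Some = g"
  by (auto simp: map_comp_def)

lemma map_comp_Some_left: "Some \<circ>\<^sub>m g = g"
  by (rule ext) (auto simp: map_comp_def split: option.splits)

lemma pcomp_in:
  assumes "\<forall>g\<in>\<Gamma>. \<forall>h\<in>\<Gamma>. h \<circ>\<^sub>m g \<in> \<Gamma>" "\<forall>g\<in>\<Gamma>. pinv g \<in> \<Gamma>"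
    and "set hs \<subseteq> \<Gamma> \<union> pinv ` \<Gamma>"
  shows "pcomp_list hs \<in> insert Some \<Gamma>"
  using assms(3)
proof (induction hs)
  case Nil
  then show ?case by (simp add: pcomp_list_def)
next
  case (Cons h hs)
  then have h: "h \<in> \<Gamma>" using assms(2) by auto
  from Cons have "pcomp_list hs \<in> insert Some \<Gamma>" by auto
  then show ?case using h assms(1)
    by (auto simp: pcomp_list_def map_comp_Some_right)
qed


lemma G1_sub:
  assumes "generates G1 G" shows "G1 \<subseteq> G"
proof
  fix g assume g: "g \<in> G1"
  have ph: "phomeo g" using assms g by (auto simp: generates_def)
  have od: "open (dom g)" using ph by (simp add: phomeo_def)
  have pg: "pcomp_list [g] = g" by (simp add: pcomp_list_def map_comp_Some_right)
  have "\<forall>x\<in>dom g. \<exists>U hs. open U \<and> x \<in> U \<and> U \<subseteq> dom g \<and>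
                 set hs \<subseteq> G1 \<union> pinv ` G1 \<and> g |` U = pcomp_list hs |` U"
  proof
    fix x assume x: "x \<in> dom g"
    show "\<exists>U hs. open U \<and> x \<in> U \<and> U \<subseteq> dom g \<and>
                 set hs \<subseteq> G1 \<union> pinv ` G1 \<and> g |` U = pcomp_list hs |` U"
      by (rule exI[of _ "dom g"], rule exI[of _ "[g]"]) (use g od pg x in auto)
  qed
  then show "g \<in> G" using assms ph by (auto simp: generates_def)
qed

lemma lebesgue_gen:
  assumes gen: "generates \<Gamma> G" and g: "g \<in> G" and K: "compact Kg" "Kg \<subseteq> dom g"
  shows "\<exists>e>0. \<forall>x\<in>Kg. \<exists>hs. set hs \<subseteq> \<Gamma> \<union> pinv ` \<Gamma> \<and>
            (\<forall>y. dist x y < e \<longrightarrow> g y = pcomp_list hs y)"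
proof -
  define C where "C = {U. open U \<and> (\<exists>hs. set hs \<subseteq> \<Gamma> \<union> pinv ` \<Gamma> \<and> g |` U = pcomp_list hs |` U)}"
  have loc: "\<forall>x\<in>dom g. \<exists>U hs. open U \<and> x \<in> U \<and> U \<subseteq> dom g \<and>
                 set hs \<subseteq> \<Gamma> \<union> pinv ` \<Gamma> \<and> g |` U = pcomp_list hs |` U"
    using gen g by (auto simp: generates_def)
  have "Kg \<subseteq> \<Union>C"
  proof
    fix x assume "x \<in> Kg"
    then have "x \<in> dom g" using K by auto
    then show "x \<in> \<Union>C" using loc unfolding C_def by blast
  qed
  then obtain e where e: "0 < e" "\<And>x. x \<in> Kg \<Longrightarrow> \<exists>U \<in> C. ball x e \<subseteq> U"
    using Heine_Borel_lemma[OF K(1)] unfolding C_def by blast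
  show ?thesis
  proof (intro exI[of _ e] conjI ballI)
    fix x assume "x \<in> Kg"
    then obtain U where U: "U \<in> C" "ball x e \<subseteq> U" using e by blast
    then obtain hs where hs: "set hs \<subseteq> \<Gamma> \<union> pinv ` \<Gamma>" "g |` U = pcomp_list hs |` U"
      unfolding C_def by blast
    have "\<forall>y. dist x y < e \<longrightarrow> g y = pcomp_list hs y"
    proof (intro allI impI)
      fix y assume "dist x y < e"
      then have "y \<in> U" using U by auto
      then show "g y = pcomp_list hs y" using fun_cong[OF hs(2), of y] by simp
    qed
    then show "\<exists>hs. set hs \<subseteq> \<Gamma> \<union> pinv ` \<Gamma> \<and> (\<forall>y. dist x y < e \<longrightarrow> g y = pcomp_list hs y)"
      using hs by blast
  qed (use e in auto)
qed

theorem mainTheorem19: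
  fixes G G1 :: "('a::metric_space \<rightharpoonup> 'a) set" and K :: "('a \<rightharpoonup> 'a) \<Rightarrow> 'a set"
  assumes "compact (UNIV :: 'a set)"
    and "pseudogroup G"
    and "good_generating_set G G1 K"
    and "equicontinuous_pg G"
  shows "\<not> (\<exists>\<mu>::'a measure. prob_space \<mu> \<and> sets \<mu> = sets borel \<and>
             expansive_measure (compacted G1 K) \<mu>)"
proof
  assume "\<exists>\<mu>::'a measure. prob_space \<mu> \<and> sets \<mu> = sets borel \<and>
             expansive_measure (compacted G1 K) \<mu>"
  then obtain \<mu> :: "'a measure" and \<delta> where mu: "prob_space \<mu>" "sets \<mu> = sets borel"
    and dl: "\<delta> > 0" and null: "\<And>x. Phi (compacted G1 K) \<delta> x \<in> null_sets \<mu>"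
    by (auto simp: expansive_measure_def)
  define G2 where "G2 = compacted G1 K"
  have fin: "finite G1" and gen1: "generates G1 G" and Kc: "\<forall>g\<in>G1. compact (K g) \<and> K g \<subseteq> dom g"
    using assms(3) by (auto simp: good_generating_set_def)
  obtain \<Gamma> where gen: "generates \<Gamma> G" and cl: "\<forall>g\<in>\<Gamma>. \<forall>h\<in>\<Gamma>. h \<circ>\<^sub>m g \<in> \<Gamma>"
    and inv: "\<forall>g\<in>\<Gamma>. pinv g \<in> \<Gamma>"
    and eqc: "\<forall>\<epsilon>>0. \<exists>\<delta>>0. \<forall>g\<in>\<Gamma>. \<forall>x\<in>dom g. \<forall>y\<in>dom g.
           dist x y < \<delta> \<longrightarrow> dist (the (g x)) (the (g y)) < \<epsilon>"
    using assms(4) by (auto simp: equicontinuous_pg_def)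
  have G1G: "G1 \<subseteq> G" using G1_sub[OF gen1] .
  define Q where "Q = (\<lambda>g e. \<forall>x\<in>K g. \<exists>hs. set hs \<subseteq> \<Gamma> \<union> pinv ` \<Gamma> \<and>
            (\<forall>y. dist x y < (e::real) \<longrightarrow> g y = pcomp_list hs y))"
  have "\<exists>e>0. \<forall>g\<in>G1. Q g e"
  proof (rule fin_uniform[OF fin])
    show "\<forall>a\<in>G1. \<exists>e>0. Q a e"
    proof
      fix a assume a: "a \<in> G1"
      have "a \<in> G" using a G1G by blast
      moreover have "compact (K a)" "K a \<subseteq> dom a" using Kc a by auto
      ultimately show "\<exists>e>0. Q a e" unfolding Q_def by (rule lebesgue_gen[OF gen])
    qed
    show "\<And>a e e'. Q a e \<Longrightarrow> 0 < e' \<Longrightarrow> e' \<le> e \<Longrightarrow> Q a e'"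
      unfolding Q_def by (meson less_le_trans)
  qed
  then obtain lam where lam: "lam > 0" "\<forall>g\<in>G1. Q g lam" by blast
  define m where "m = min lam \<delta>"
  have m: "m > 0" "m \<le> lam" "m \<le> \<delta>" using lam dl by (auto simp: m_def)
  obtain \<eta>0 where \<eta>0: "\<eta>0 > 0" "\<forall>g\<in>\<Gamma>. \<forall>x\<in>dom g. \<forall>y\<in>dom g.
           dist x y < \<eta>0 \<longrightarrow> dist (the (g x)) (the (g y)) < m"
    using eqc m(1) by blast
  define \<eta> where "\<eta> = min \<eta>0 m"
  have eta: "\<eta> > 0" "\<eta> \<le> m" "\<eta> \<le> \<eta>0" using \<eta>0 m by (auto simp: \<eta>_def)
  have eq': "dist (the (g x)) (the (g y)) < m"
    if "g \<in> insert Some \<Gamma>" "x \<in> dom g" "y \<in> dom g" "dist x y < \<eta>" for g x y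
    using that eta \<eta>0(2)[rule_format, of g x y] by (cases "g = Some") auto
  have claim: "\<exists>\<gamma>\<in>insert Some \<Gamma>. \<gamma> x = pcomp_list hs x \<and> \<gamma> y = pcomp_list hs y"
    if "set hs \<subseteq> G2" "x \<in> dom (pcomp_list hs)" "y \<in> dom (pcomp_list hs)" "dist x y < \<eta>"
    for hs x y
    using that
  proof (induction hs)
    case Nil
    then show ?case by (auto simp: pcomp_list_def)
  next
    case (Cons h hs)
    define p where "p = pcomp_list hs"
    have pc: "pcomp_list (h # hs) = h \<circ>\<^sub>m p" by (simp add: pcomp_list_def p_def)
    obtain x' hx where x': "p x = Some x'" "h x' = Some hx"
      using Cons.prems(2) unfolding pc by (auto simp: map_comp_def split: option.splits)
    obtain y' hy where y': "p y = Some y'" "h y' = Some hy"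
      using Cons.prems(3) unfolding pc by (auto simp: map_comp_def split: option.splits)
    obtain \<gamma>' where g': "\<gamma>' \<in> insert Some \<Gamma>" "\<gamma>' x = p x" "\<gamma>' y = p y"
    proof -
      have "set hs \<subseteq> G2" using Cons.prems(1) by simp
      moreover have "x \<in> dom (pcomp_list hs)" "y \<in> dom (pcomp_list hs)"
        using x'(1) y'(1) unfolding p_def by auto
      ultimately have "\<exists>\<gamma>\<in>insert Some \<Gamma>. \<gamma> x = pcomp_list hs x \<and> \<gamma> y = pcomp_list hs y"
        using Cons.IH Cons.prems(4) by blast
      then show ?thesis using that unfolding p_def by blast
    qed
    have dxy: "dist x' y' < m"
      using eq'[OF g'(1), of x y] g' x' y' Cons.prems(4) by auto
    have "h \<in> G2" using Cons.prems(1) by auto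
    then obtain g where g: "g \<in> G1" "h = g |` interior (K g)"
      unfolding G2_def compacted_def by blast
    have x'K: "x' \<in> interior (K g)" and y'K: "y' \<in> interior (K g)"
      using x'(2) y'(2) g(2) by (cases "x' \<in> interior (K g)"; cases "y' \<in> interior (K g)"; simp)+
    then have "x' \<in> K g" using interior_subset by blast
    then obtain qs where qs: "set qs \<subseteq> \<Gamma> \<union> pinv ` \<Gamma>"
      "\<forall>y. dist x' y < lam \<longrightarrow> g y = pcomp_list qs y"
      using lam g(1) unfolding Q_def by blast
    have q: "pcomp_list qs \<in> insert Some \<Gamma>" using pcomp_in[OF cl inv qs(1)] .
    have "h x' = g x'" "h y' = g y'" using g(2) x'K y'K by simp_all
    moreover have "g x' = pcomp_list qs x'" using qs(2) lam(1) by simp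
    moreover have "g y' = pcomp_list qs y'" using qs(2) dxy m(2) by simp
    ultimately have hx': "h x' = pcomp_list qs x'" and hy': "h y' = pcomp_list qs y'" by simp_all
    have "pcomp_list qs \<circ>\<^sub>m \<gamma>' \<in> insert Some \<Gamma>"
    proof (cases "\<gamma>' = Some")
      case True then show ?thesis using q by (simp add: map_comp_Some_right)
    next
      case False then have g'G: "\<gamma>' \<in> \<Gamma>" using g'(1) by simp
      show ?thesis
      proof (cases "pcomp_list qs = Some")
        case True then show ?thesis using g'G by (simp add: map_comp_Some_left)
      next
        case False then have "pcomp_list qs \<in> \<Gamma>" using q by simp
        then show ?thesis using cl g'G by blast
      qed
    qed
    moreover have "(pcomp_list qs \<circ>\<^sub>m \<gamma>') x = pcomp_list (h # hs) x"
      using g' x' hx' unfolding pc by (simp add: map_comp_def)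
    moreover have "(pcomp_list qs \<circ>\<^sub>m \<gamma>') y = pcomp_list (h # hs) y"
      using g' y' hy' unfolding pc by (simp add: map_comp_def)
    ultimately show ?case by blast
  qed
  have ballsub: "ball x \<eta> \<subseteq> Phi G2 \<delta> x" for x
  proof
    fix y assume "y \<in> ball x \<eta>"
    then have dy: "dist x y < \<eta>" by simp
    show "y \<in> Phi G2 \<delta> x"
      unfolding Phi_def words_def
    proof (intro CollectI allI impI ballI)
      fix n g assume gw: "g \<in> {pcomp_list hs |hs. length hs = n \<and> set hs \<subseteq> G2}"
        and d: "x \<in> dom g \<and> y \<in> dom g"
      then obtain hs where hs: "g = pcomp_list hs" "set hs \<subseteq> G2" by blast
      obtain \<gamma> where ga: "\<gamma> \<in> insert Some \<Gamma>" "\<gamma> x = g x" "\<gamma> y = g y"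
        using claim[OF hs(2) _ _ dy] d hs(1) by blast
      have "x \<in> dom \<gamma>" "y \<in> dom \<gamma>" using ga d by (auto simp: domIff)
      then have "dist (the (\<gamma> x)) (the (\<gamma> y)) < m" using eq'[OF ga(1)] dy by blast
      then show "dist (the (g x)) (the (g y)) \<le> \<delta>" using ga m by simp
    qed
  qed
  have bn: "ball x \<eta> \<in> null_sets \<mu>" for x
  proof (rule null_sets_subset[OF null[of x, folded G2_def] _ ballsub])
    show "ball x \<eta> \<in> sets \<mu>" using mu(2) by simp
  qed
  obtain C :: "'a set" where C: "finite C" "UNIV \<subseteq> (\<Union>c\<in>C. ball c \<eta>)"
  proof -
    have cov: "(UNIV :: 'a set) \<subseteq> (\<Union>c\<in>(UNIV :: 'a set). ball c \<eta>)"
    proof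
      fix z :: 'a assume "z \<in> UNIV" show "z \<in> (\<Union>c\<in>UNIV. ball c \<eta>)" using eta(1) by (intro UN_I[of z]) auto
    qed
    obtain C :: "'a set" where "C \<subseteq> UNIV" "finite C" "UNIV \<subseteq> (\<Union>c\<in>C. ball c \<eta>)"
      by (rule compactE_image[OF assms(1) _ cov]) auto
    then show ?thesis using that by blast
  qed
  have "(\<Union>c\<in>C. ball c \<eta>) \<in> null_sets \<mu>"
    using C(1) bn by (intro null_sets.finite_UN) auto
  moreover have "(\<Union>c\<in>C. ball c \<eta>) = UNIV" using C(2) by blast
  ultimately have "UNIV \<in> null_sets \<mu>" by simp
  moreover have "space \<mu> = UNIV" using sets_eq_imp_space_eq[OF mu(2)] by simp
  ultimately show False using prob_space.emeasure_space_1[OF mu(1)] by auto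
qed

end
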